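(* For every odd integer $n\ge 5$ there exists a square torus $T^2=\mathbb{R}^2/\{(2\pi\tilde k a,2\pi\tilde l a):\tilde k,\tilde l\in\mathbb{Z}\}$, for some $a>0$, with its flat metric, that admits a (full, isometric) proper-biharmonic immersion into the unit sphere $\mathbb{S}^n$ with constant mean curvature.
   Context: A map $\phi:(M,g)\to(N,\tilde g)$ between Riemannian manifolds is biharmonic if it is a critical point of the bienergy $E_2(\phi)=\frac12\int_M|\tau(\phi)|^2v_g$, equivalently if $\tau_2(\phi)=-\Delta\tau(\phi)-\operatorname{trace}R^N(d\phi,\tau(\phi))d\phi=0$, where $\tau(\phi)$ is the tension field; it is proper-biharmonic if biharmonic but not harmonic. Constant mean curvature (CMC) means $|H|$ is constant, $H$ the mean curvature vector field. Immersions are isometric and full, i.e. their image does not lie in any totally geodesic sphere $\mathbb{S}^{n'}\subset\mathbb{S}^n$ with $n'<n$. *)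

theory Defs
  imports "HOL-Analysis.Analysis"
begin

text \<open>Maps from R^2 (coordinates (x,y), flat metric dx^2+dy^2) into R^(N) = real^'n.
  The unit sphere S^n sits in real^'n with n = CARD('n) - 1.\<close>

definition pdx :: "(real \<times> real \<Rightarrow> 'a::real_normed_vector) \<Rightarrow> real \<times> real \<Rightarrow> 'a" where
  "pdx f = (\<lambda>(x,y). vector_derivative (\<lambda>t. f (t,y)) (at x))"

definition pdy :: "(real \<times> real \<Rightarrow> 'a::real_normed_vector) \<Rightarrow> real \<times> real \<Rightarrow> 'a" where
  "pdy f = (\<lambda>(x,y). vector_derivative (\<lambda>t. f (x,t)) (at y))"

fun iter_pd :: "bool list \<Rightarrow> (real \<times> real \<Rightarrow> 'a::real_normed_vector) \<Rightarrow> real \<times> real \<Rightarrow> 'a" where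
  "iter_pd [] f = f"
| "iter_pd (b # bs) f = (if b then pdx else pdy) (iter_pd bs f)"

definition smooth2 :: "(real \<times> real \<Rightarrow> 'a::real_normed_vector) \<Rightarrow> bool" where
  "smooth2 f \<longleftrightarrow> (\<forall>bs. continuous_on UNIV (iter_pd bs f) \<and>
      (\<forall>x y. (\<lambda>t. iter_pd bs f (t,y)) differentiable (at x) \<and>
             (\<lambda>t. iter_pd bs f (x,t)) differentiable (at y)))"

text \<open>Induced (pull-back) Levi-Civita connection of S^n along phi, acting on a vector
  field V along phi tangent to the sphere: tangential projection of the ambient derivative.\<close>
definition nabla_x :: "(real \<times> real \<Rightarrow> real^'n) \<Rightarrow> (real \<times> real \<Rightarrow> real^'n) \<Rightarrow> real \<times> real \<Rightarrow> real^'n" where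
  "nabla_x \<phi> V = (\<lambda>p. pdx V p - (pdx V p \<bullet> \<phi> p) *\<^sub>R \<phi> p)"

definition nabla_y :: "(real \<times> real \<Rightarrow> real^'n) \<Rightarrow> (real \<times> real \<Rightarrow> real^'n) \<Rightarrow> real \<times> real \<Rightarrow> real^'n" where
  "nabla_y \<phi> V = (\<lambda>p. pdy V p - (pdy V p \<bullet> \<phi> p) *\<^sub>R \<phi> p)"

text \<open>Tension field tau(phi) = trace nabla d phi (orthonormal frame d/dx, d/dy, which is parallel).\<close>
definition tension :: "(real \<times> real \<Rightarrow> real^'n) \<Rightarrow> real \<times> real \<Rightarrow> real^'n" where
  "tension \<phi> = (\<lambda>p. nabla_x \<phi> (pdx \<phi>) p + nabla_y \<phi> (pdy \<phi>) p)"

definition sphere_curv :: "real^'n \<Rightarrow> real^'n \<Rightarrow> real^'n \<Rightarrow> real^'n" where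
  "sphere_curv X Y Z = (Y \<bullet> Z) *\<^sub>R X - (X \<bullet> Z) *\<^sub>R Y"

text \<open>Bitension field tau_2 = - Delta tau - trace R(d phi, tau) d phi, with the rough Laplacian
  Delta = - trace (nabla nabla - nabla_nabla); in the flat frame -Delta tau = sum_i nabla_i nabla_i tau.\<close>
definition bitension :: "(real \<times> real \<Rightarrow> real^'n) \<Rightarrow> real \<times> real \<Rightarrow> real^'n" where
  "bitension \<phi> = (let \<tau> = tension \<phi> in
     (\<lambda>p. nabla_x \<phi> (nabla_x \<phi> \<tau>) p + nabla_y \<phi> (nabla_y \<phi> \<tau>) p
          - (sphere_curv (pdx \<phi> p) (\<tau> p) (pdx \<phi> p) + sphere_curv (pdy \<phi> p) (\<tau> p) (pdy \<phi> p))))"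

definition mean_curv :: "(real \<times> real \<Rightarrow> real^'n) \<Rightarrow> real \<times> real \<Rightarrow> real^'n" where
  "mean_curv \<phi> = (\<lambda>p. (1/2) *\<^sub>R tension \<phi> p)"

text \<open>phi is the lift of a map from the square torus R^2 / (2 pi a Z)^2.\<close>
definition square_torus_periodic :: "real \<Rightarrow> (real \<times> real \<Rightarrow> 'a) \<Rightarrow> bool" where
  "square_torus_periodic a \<phi> \<longleftrightarrow>
     (\<forall>x y. \<phi> (x + 2*pi*a, y) = \<phi> (x,y) \<and> \<phi> (x, y + 2*pi*a) = \<phi> (x,y))"

definition isometric_immersion_sphere :: "(real \<times> real \<Rightarrow> real^'n) \<Rightarrow> bool" where
  "isometric_immersion_sphere \<phi> \<longleftrightarrow> smooth2 \<phi> \<and> (\<forall>p. norm (\<phi> p) = 1) \<and>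
     (\<forall>p. pdx \<phi> p \<bullet> pdx \<phi> p = 1 \<and> pdy \<phi> p \<bullet> pdy \<phi> p = 1 \<and> pdx \<phi> p \<bullet> pdy \<phi> p = 0)"

text \<open>Full: image not contained in a totally geodesic proper subsphere, i.e. in no
  hyperplane through the origin.\<close>
definition full_map :: "(real \<times> real \<Rightarrow> real^'n) \<Rightarrow> bool" where
  "full_map \<phi> \<longleftrightarrow> \<not> (\<exists>v. v \<noteq> 0 \<and> (\<forall>p. v \<bullet> \<phi> p = 0))"

definition biharmonic :: "(real \<times> real \<Rightarrow> real^'n) \<Rightarrow> bool" where
  "biharmonic \<phi> \<longleftrightarrow> (\<forall>p. bitension \<phi> p = 0)"

definition harmonic :: "(real \<times> real \<Rightarrow> real^'n) \<Rightarrow> bool" where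
  "harmonic \<phi> \<longleftrightarrow> (\<forall>p. tension \<phi> p = 0)"

definition proper_biharmonic :: "(real \<times> real \<Rightarrow> real^'n) \<Rightarrow> bool" where
  "proper_biharmonic \<phi> \<longleftrightarrow> biharmonic \<phi> \<and> \<not> harmonic \<phi>"

definition CMC :: "(real \<times> real \<Rightarrow> real^'n) \<Rightarrow> bool" where
  "CMC \<phi> \<longleftrightarrow> (\<exists>c. \<forall>p. norm (mean_curv \<phi> p) = c)"

end

theory Submission
  imports Defs
begin



definition G :: "(nat \<Rightarrow> 'v::real_normed_vector) \<Rightarrow> nat \<Rightarrow> (nat \<Rightarrow> real) \<Rightarrow> (nat \<Rightarrow> real) \<Rightarrow> (nat \<Rightarrow> complex) \<Rightarrow> real \<times> real \<Rightarrow> 'v" where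
"G E m a b c = (\<lambda>(x,y). \<Sum>j<m. (Re (c j) * cos (a j * x + b j * y) - Im (c j) * sin (a j * x + b j * y)) *\<^sub>R E (2*j)
    + (Re (c j) * sin (a j * x + b j * y) + Im (c j) * cos (a j * x + b j * y)) *\<^sub>R E (2*j+1))"

lemma G_dx: "((\<lambda>t. G E m a b c (t,y)) has_vector_derivative G E m a b (\<lambda>j. \<i> * of_real (a j) * c j) (x,y)) (at x)"
  unfolding G_def split
  apply (rule derivative_eq_intros refl | simp)+
  apply (rule sum.cong, simp)
  apply (simp add: algebra_simps)
  done

lemma G_dy: "((\<lambda>t. G E m a b c (x,t)) has_vector_derivative G E m a b (\<lambda>j. \<i> * of_real (b j) * c j) (x,y)) (at y)"
  unfolding G_def split
  apply (rule derivative_eq_intros refl | simp)+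
  apply (rule sum.cong, simp)
  apply (simp add: algebra_simps)
  done




lemma pdx_G: "pdx (G E m a b c) = G E m a b (\<lambda>j. \<i> * of_real (a j) * c j)"
  unfolding pdx_def by (rule ext) (auto intro!: vector_derivative_at G_dx)

lemma pdy_G: "pdy (G E m a b c) = G E m a b (\<lambda>j. \<i> * of_real (b j) * c j)"
  unfolding pdy_def by (rule ext) (auto intro!: vector_derivative_at G_dy)

lemma iter_pd_G: "\<exists>c'. iter_pd bs (G E m a b c) = G E m a b c'"
proof (induction bs)
  case Nil then show ?case by auto
next
  case (Cons x bs)
  then obtain c' where "iter_pd bs (G E m a b c) = G E m a b c'" by auto
  then show ?case by (auto simp: pdx_G pdy_G)
qed

lemma cont_G: "continuous_on UNIV (G E m a b c)"
  unfolding G_def split_def by (intro continuous_intros)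

lemma smooth_G: "smooth2 (G E m a b c)"
  unfolding smooth2_def
proof (intro allI conjI)
  fix bs x y
  obtain c' where e: "iter_pd bs (G E m a b c) = G E m a b c'" using iter_pd_G by blast
  show "continuous_on UNIV (iter_pd bs (G E m a b c))" unfolding e by (rule cont_G)
  show "(\<lambda>t. iter_pd bs (G E m a b c) (t, y)) differentiable at x" unfolding e
    using G_dx by (rule differentiableI_vector)
  show "(\<lambda>t. iter_pd bs (G E m a b c) (x, t)) differentiable at y" unfolding e
    using G_dy by (rule differentiableI_vector)
qed

lemma G_add: "G E m a b c p + G E m a b d p = G E m a b (\<lambda>j. c j + d j) p"
  unfolding G_def split_def sum.distrib[symmetric]
  by (intro sum.cong refl) (simp add: scaleR_add_left algebra_simps)

lemma G_scale: "s *\<^sub>R G E m a b c p = G E m a b (\<lambda>j. of_real s * c j) p"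
  unfolding G_def split_def scaleR_sum_right
  by (intro sum.cong refl) (simp add: scaleR_add_left algebra_simps)

lemma G_diff: "G E m a b c p - G E m a b d p = G E m a b (\<lambda>j. c j - d j) p"
  unfolding G_def split_def sum_subtractf[symmetric]
  by (intro sum.cong refl) (simp add: scaleR_diff_left algebra_simps)

lemma G_zero: "G E m a b (\<lambda>j. 0) p = 0"
  unfolding G_def split_def by simp

lemma cis_aux: "(Rc * cos t - Icc * sin t) * (Rd * cos t - Idd * sin t) +
   (Rc * sin t + Icc * cos t) * (Rd * sin t + Idd * cos t) = Rc * Rd + Icc * (Idd::real)"
proof -
  have "(Rc * cos t - Icc * sin t) * (Rd * cos t - Idd * sin t) +
   (Rc * sin t + Icc * cos t) * (Rd * sin t + Idd * cos t) = (Rc * Rd + Icc * Idd) * ((sin t)^2 + (cos t)^2)"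
    unfolding power2_eq_square by algebra
  then show ?thesis by simp
qed

lemma G_inner:
  fixes E :: "nat \<Rightarrow> 'v::real_inner"
  assumes ON: "\<And>i i'. i < 2*m \<Longrightarrow> i' < 2*m \<Longrightarrow> inner (E i) (E i') = (if i = i' then 1 else 0)"
  shows "inner (G E m a b c p) (G E m a b d p) = (\<Sum>j<m. Re (cnj (c j) * d j))"
proof -
  obtain x y where p: "p = (x,y)" by fastforce
  define th where "th j = a j * x + b j * y" for j
  have key: "inner ((Re (c j) * cos (th j) - Im (c j) * sin (th j)) *\<^sub>R E (2*j)
    + (Re (c j) * sin (th j) + Im (c j) * cos (th j)) *\<^sub>R E (2*j+1))
    ((Re (d k) * cos (th k) - Im (d k) * sin (th k)) *\<^sub>R E (2*k)
    + (Re (d k) * sin (th k) + Im (d k) * cos (th k)) *\<^sub>R E (2*k+1))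
    = (if j = k then Re (cnj (c j) * d j) else 0)" if "j < m" "k < m" for j k
  proof -
    have "inner (E (2*j)) (E (2*k)) = (if j = k then 1 else 0)" using ON[of "2*j" "2*k"] that by auto
    moreover have "inner (E (2*j+1)) (E (2*k+1)) = (if j = k then 1 else 0)" using ON[of "2*j+1" "2*k+1"] that by auto
    moreover have n1: "2*j \<noteq> 2*k+1" "2*j+1 \<noteq> 2*k" by presburger+
    moreover have "inner (E (2*j)) (E (2*k+1)) = 0" using ON[of "2*j" "2*k+1"] that n1 by simp
    moreover have "inner (E (2*j+1)) (E (2*k)) = 0" using ON[of "2*j+1" "2*k"] that n1 by simp
    ultimately show ?thesis
      by (cases "j = k") (simp_all add: inner_add_left inner_add_right cis_aux)
  qed
  define T where "T e j = (Re (e j) * cos (th j) - Im (e j) * sin (th j)) *\<^sub>R E (2*j)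
    + (Re (e j) * sin (th j) + Im (e j) * cos (th j)) *\<^sub>R E (2*j+1)" for e :: "nat \<Rightarrow> complex" and j
  have "G E m a b e p = (\<Sum>j<m. T e j)" for e unfolding p G_def T_def th_def by simp
  then have "inner (G E m a b c p) (G E m a b d p) = (\<Sum>k<m. \<Sum>j<m. inner (T c j) (T d k))"
    by (simp add: inner_sum_left inner_sum_right)
  also have "\<dots> = (\<Sum>k<m. \<Sum>j<m. (if j = k then Re (cnj (c j) * d j) else 0))"
    unfolding T_def apply (intro sum.cong refl)
    subgoal for k j using key[of j k] by simp
    done
  also have "\<dots> = (\<Sum>j<m. Re (cnj (c j) * d j))"
    by (simp add: sum.delta')
  finally show ?thesis .
qed




lemma G_cong: "(\<And>j. j < m \<Longrightarrow> c j = d j) \<Longrightarrow> G E m a b c = G E m a b d"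
  unfolding G_def by (intro ext) (auto intro!: sum.cong simp: split_def)

locale conf =
  fixes E :: "nat \<Rightarrow> real^'n" and m :: nat and a b r :: "nat \<Rightarrow> real" and al be :: real
  assumes ON: "\<And>i i'. i < 2*m \<Longrightarrow> i' < 2*m \<Longrightarrow> inner (E i) (E i') = (if i = i' then 1 else 0)"
    and S1: "(\<Sum>j<m. r j ^ 2) = 1"
    and S2: "(\<Sum>j<m. r j ^ 2 * a j ^ 2) = 1"
    and S3: "(\<Sum>j<m. r j ^ 2 * b j ^ 2) = 1"
    and S4: "(\<Sum>j<m. r j ^ 2 * (a j * b j)) = 0"
    and LAM: "al + be = 4" "\<And>j. j < m \<Longrightarrow> a j ^ 2 + b j ^ 2 = al \<or> a j ^ 2 + b j ^ 2 = be"
begin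

abbreviation "GG \<equiv> G E m a b"
abbreviation "cr \<equiv> (\<lambda>j. complex_of_real (r j))"
abbreviation "\<phi> \<equiv> GG cr"
definition "lam j = a j ^ 2 + b j ^ 2"

lemma nabla_x_G: "nabla_x \<phi> (GG c) = GG (\<lambda>j. \<i> * of_real (a j) * c j - of_real (\<Sum>k<m. Re (cnj (\<i> * of_real (a k) * c k) * cr k)) * cr j)"
  unfolding nabla_x_def pdx_G
  by (rule ext) (simp add: G_inner[OF ON] G_scale G_diff)

lemma nabla_y_G: "nabla_y \<phi> (GG c) = GG (\<lambda>j. \<i> * of_real (b j) * c j - of_real (\<Sum>k<m. Re (cnj (\<i> * of_real (b k) * c k) * cr k)) * cr j)"
  unfolding nabla_y_def pdy_G
  by (rule ext) (simp add: G_inner[OF ON] G_scale G_diff)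

lemma tension_phi: "tension \<phi> = GG (\<lambda>j. of_real ((2 - lam j) * r j))"
proof -
  have e1: "(\<Sum>k<m. Re (cnj (\<i> * of_real (a k) * (\<i> * of_real (a k) * cr k)) * cr k)) = -1"
    using S2 by (simp add: sum_negf power2_eq_square algebra_simps)
  have e2: "(\<Sum>k<m. Re (cnj (\<i> * of_real (b k) * (\<i> * of_real (b k) * cr k)) * cr k)) = -1"
    using S3 by (simp add: sum_negf power2_eq_square algebra_simps)
  show ?thesis
    unfolding tension_def pdx_G pdy_G nabla_x_G nabla_y_G e1 e2
    by (rule ext) (auto simp: G_add lam_def intro!: arg_cong[where f="\<lambda>c. c _"] G_cong
         simp flip: of_real_mult of_real_add of_real_diff simp: algebra_simps power2_eq_square)
qed

lemma sum_lam: "(\<Sum>j<m. r j ^ 2 * lam j) = 2"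
  using S2 S3 by (simp add: lam_def algebra_simps sum.distrib)

lemma lam_sq: "j < m \<Longrightarrow> lam j ^ 2 = 4 * lam j - al * be"
proof -
  assume j: "j < m"
  have be: "be = 4 - al" using LAM(1) by simp
  have al: "al = 4 - be" using LAM(1) by simp
  from LAM(2)[OF j] have "lam j = al \<or> lam j = be" unfolding lam_def .
  then show ?thesis
  proof
    assume "lam j = al" then show ?thesis unfolding be by (simp add: power2_eq_square algebra_simps)
  next
    assume "lam j = be" then show ?thesis unfolding al by (simp add: power2_eq_square algebra_simps)
  qed
qed

lemma sum_lam2: "(\<Sum>j<m. r j ^ 2 * lam j ^ 2) = 8 - al * be"
proof -
  have "(\<Sum>j<m. r j ^ 2 * lam j ^ 2) = (\<Sum>j<m. 4 * (r j ^ 2 * lam j) - al * be * r j ^ 2)"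
    by (intro sum.cong refl) (simp add: lam_sq algebra_simps)
  also have "\<dots> = 4 * 2 - al * be * 1"
    by (simp add: sum_subtractf sum_distrib_left[symmetric] sum_lam S1)
  finally show ?thesis by simp
qed

abbreviation "tc \<equiv> (\<lambda>j. complex_of_real ((2 - lam j) * r j))"

lemma nx_tau: "nabla_x \<phi> (tension \<phi>) = GG (\<lambda>j. \<i> * of_real (a j) * tc j)"
  unfolding tension_phi nabla_x_G by (rule G_cong) simp

lemma ny_tau: "nabla_y \<phi> (tension \<phi>) = GG (\<lambda>j. \<i> * of_real (b j) * tc j)"
  unfolding tension_phi nabla_y_G by (rule G_cong) simp

lemma nxx_tau: "nabla_x \<phi> (nabla_x \<phi> (tension \<phi>)) =
   GG (\<lambda>j. of_real (- (a j ^ 2 * (2 - lam j) * r j) + (\<Sum>k<m. a k ^ 2 * (2 - lam k) * r k ^ 2) * r j))"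
proof -
  have e: "(\<Sum>k<m. Re (cnj (\<i> * of_real (a k) * (\<i> * of_real (a k) * tc k)) * cr k)) =
     - (\<Sum>k<m. a k ^ 2 * (2 - lam k) * r k ^ 2)"
    by (simp add: sum_negf[symmetric] power2_eq_square algebra_simps)
  show ?thesis unfolding nx_tau nabla_x_G e
    by (rule G_cong) (simp add: algebra_simps power2_eq_square)
qed

lemma nyy_tau: "nabla_y \<phi> (nabla_y \<phi> (tension \<phi>)) =
   GG (\<lambda>j. of_real (- (b j ^ 2 * (2 - lam j) * r j) + (\<Sum>k<m. b k ^ 2 * (2 - lam k) * r k ^ 2) * r j))"
proof -
  have e: "(\<Sum>k<m. Re (cnj (\<i> * of_real (b k) * (\<i> * of_real (b k) * tc k)) * cr k)) =
     - (\<Sum>k<m. b k ^ 2 * (2 - lam k) * r k ^ 2)"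
    by (simp add: sum_negf[symmetric] power2_eq_square algebra_simps)
  show ?thesis unfolding ny_tau nabla_y_G e
    by (rule G_cong) (simp add: algebra_simps power2_eq_square)
qed

lemma curv_x: "sphere_curv (pdx \<phi> p) (tension \<phi> p) (pdx \<phi> p) = - tension \<phi> p"
proof -
  have i1: "inner (tension \<phi> p) (pdx \<phi> p) = 0"
    unfolding tension_phi pdx_G by (simp add: G_inner[OF ON])
  have i2: "inner (pdx \<phi> p) (pdx \<phi> p) = 1"
    unfolding pdx_G by (simp only: G_inner[OF ON]) (use S2 in \<open>simp add: power2_eq_square algebra_simps\<close>)
  show ?thesis unfolding sphere_curv_def i1 i2 by simp
qed

lemma curv_y: "sphere_curv (pdy \<phi> p) (tension \<phi> p) (pdy \<phi> p) = - tension \<phi> p"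
proof -
  have i1: "inner (tension \<phi> p) (pdy \<phi> p) = 0"
    unfolding tension_phi pdy_G by (simp add: G_inner[OF ON])
  have i2: "inner (pdy \<phi> p) (pdy \<phi> p) = 1"
    unfolding pdy_G by (simp only: G_inner[OF ON]) (use S3 in \<open>simp add: power2_eq_square algebra_simps\<close>)
  show ?thesis unfolding sphere_curv_def i1 i2 by simp
qed

lemma sum_ab: "(\<Sum>k<m. a k ^ 2 * (2 - lam k) * r k ^ 2) + (\<Sum>k<m. b k ^ 2 * (2 - lam k) * r k ^ 2) = al * be - 4"
proof -
  have "(\<Sum>k<m. a k ^ 2 * (2 - lam k) * r k ^ 2) + (\<Sum>k<m. b k ^ 2 * (2 - lam k) * r k ^ 2)
     = (\<Sum>k<m. 2 * (r k ^ 2 * lam k) - r k ^ 2 * lam k ^ 2)"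
    unfolding sum.distrib[symmetric] by (intro sum.cong refl) (simp add: lam_def algebra_simps power2_eq_square)
  also have "\<dots> = 2 * 2 - (8 - al * be)"
    by (simp add: sum_subtractf sum_distrib_left[symmetric] sum_lam sum_lam2)
  finally show ?thesis by simp
qed

lemma G_neg: "- G E' m' a' b' c p = G E' m' a' b' (\<lambda>j. - c j) p"
  using G_scale[of "-1" E' m' a' b' c p] by simp

lemma biharm: "bitension \<phi> p = 0"
proof -
  let ?nx = "\<lambda>j. complex_of_real (- (a j ^ 2 * (2 - lam j) * r j) + (\<Sum>k<m. a k ^ 2 * (2 - lam k) * r k ^ 2) * r j)"
  let ?ny = "\<lambda>j. complex_of_real (- (b j ^ 2 * (2 - lam j) * r j) + (\<Sum>k<m. b k ^ 2 * (2 - lam k) * r k ^ 2) * r j)"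
  have "bitension \<phi> p = GG ?nx p + GG ?ny p - (- GG tc p + - GG tc p)"
    unfolding bitension_def Let_def curv_x curv_y nxx_tau nyy_tau unfolding tension_phi by (rule refl)
  also have "\<dots> = GG (\<lambda>j. ?nx j + ?ny j - (- tc j + - tc j)) p"
    by (simp only: G_neg G_add G_diff)
  also have "\<dots> = GG (\<lambda>j. 0) p"
  proof (rule fun_cong[OF G_cong])
    fix j assume j: "j < m"
    define Sa where "Sa = (\<Sum>k<m. a k ^ 2 * (2 - lam k) * r k ^ 2)"
    define Sb where "Sb = (\<Sum>k<m. b k ^ 2 * (2 - lam k) * r k ^ 2)"
    have sab: "Sa + Sb = al * be - 4" unfolding Sa_def Sb_def by (rule sum_ab)
    have "- (a j ^ 2 * (2 - lam j) * r j) + Sa * r j + (- (b j ^ 2 * (2 - lam j) * r j) + Sb * r j)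
       + 2 * ((2 - lam j) * r j) = r j * (- lam j * (2 - lam j) + (Sa + Sb) + 2 * (2 - lam j))"
      by (simp add: lam_def algebra_simps)
    also have "\<dots> = r j * (lam j ^ 2 - 4 * lam j + al * be)"
      unfolding sab by (simp add: algebra_simps power2_eq_square)
    also have "\<dots> = 0" using lam_sq[OF j] by simp
    finally have h: "- (a j ^ 2 * (2 - lam j) * r j) + Sa * r j + (- (b j ^ 2 * (2 - lam j) * r j) + Sb * r j)
       + 2 * ((2 - lam j) * r j) = 0" .
    have "complex_of_real (- (a j ^ 2 * (2 - lam j) * r j) + Sa * r j + (- (b j ^ 2 * (2 - lam j) * r j) + Sb * r j)
       + 2 * ((2 - lam j) * r j)) = 0" unfolding h by simp
    then show "?nx j + ?ny j - (- tc j + - tc j) = 0"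
      unfolding Sa_def Sb_def
      by (simp only: of_real_add of_real_mult of_real_numeral) (simp add: algebra_simps)
  qed
  finally show ?thesis by (simp add: G_zero)
qed

end



lemma cos_shift_int: "cos (t + 2 * pi * of_int k) = cos t"
  by (simp add: cos_add)
lemma sin_shift_int: "sin (t + 2 * pi * of_int k) = sin t"
  by (simp add: sin_add)

lemma shift_x: assumes "a * A = of_int k"
  shows "cos (a * (x + 2*pi*A) + b * y) = cos (a*x + b*y)" "sin (a * (x + 2*pi*A) + b * y) = sin (a*x + b*y)"
proof -
  have e: "a * (x + 2*pi*A) + b * y = (a*x + b*y) + 2 * pi * of_int k" using assms by (simp add: algebra_simps)
  show "cos (a * (x + 2*pi*A) + b * y) = cos (a*x + b*y)" unfolding e by (rule cos_shift_int)
  show "sin (a * (x + 2*pi*A) + b * y) = sin (a*x + b*y)" unfolding e by (rule sin_shift_int)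
qed

lemma shift_y: assumes "b * A = of_int k"
  shows "cos (a * x + b * (y + 2*pi*A)) = cos (a*x + b*y)" "sin (a * x + b * (y + 2*pi*A)) = sin (a*x + b*y)"
proof -
  have e: "a * x + b * (y + 2*pi*A) = (a*x + b*y) + 2 * pi * of_int k" using assms by (simp add: algebra_simps)
  show "cos (a * x + b * (y + 2*pi*A)) = cos (a*x + b*y)" unfolding e by (rule cos_shift_int)
  show "sin (a * x + b * (y + 2*pi*A)) = sin (a*x + b*y)" unfolding e by (rule sin_shift_int)
qed

context conf begin

lemma norm_phi: "norm (\<phi> p) = 1"
proof -
  have "inner (\<phi> p) (\<phi> p) = 1" using S1 by (simp add: G_inner[OF ON] power2_eq_square)
  then show ?thesis by (simp add: norm_eq_sqrt_inner)
qed

lemma iso: "pdx \<phi> p \<bullet> pdx \<phi> p = 1 \<and> pdy \<phi> p \<bullet> pdy \<phi> p = 1 \<and> pdx \<phi> p \<bullet> pdy \<phi> p = 0"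
  unfolding pdx_G pdy_G
  by (simp only: G_inner[OF ON]) (use S2 S3 S4 in \<open>simp add: power2_eq_square algebra_simps\<close>)

lemma tension_sq: "inner (tension \<phi> p) (tension \<phi> p) = (\<Sum>j<m. (2 - lam j)^2 * r j ^ 2)"
  unfolding tension_phi by (simp only: G_inner[OF ON]) (simp add: power2_eq_square mult_ac)

lemma cmc: "CMC \<phi>"
  unfolding CMC_def mean_curv_def
proof (rule exI[of _ "(1/2) * sqrt (\<Sum>j<m. (2 - lam j)^2 * r j ^ 2)"], rule allI)
  fix p
  have "norm ((1/2) *\<^sub>R tension \<phi> p) = (1/2) * norm (tension \<phi> p)" by simp
  also have "norm (tension \<phi> p) = sqrt (\<Sum>j<m. (2 - lam j)^2 * r j ^ 2)"
    unfolding norm_eq_sqrt_inner tension_sq ..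
  finally show "norm ((1/2) *\<^sub>R tension \<phi> p) = (1/2) * sqrt (\<Sum>j<m. (2 - lam j)^2 * r j ^ 2)" .
qed

lemma not_harm:
  assumes "j0 < m" "lam j0 \<noteq> 2" "r j0 \<noteq> 0"
  shows "\<not> harmonic \<phi>"
proof
  assume "harmonic \<phi>"
  then have "tension \<phi> (0,0) = 0" unfolding harmonic_def by auto
  then have "(\<Sum>j<m. (2 - lam j)^2 * r j ^ 2) = 0" using tension_sq[of "(0,0)"] by simp
  moreover have "(\<Sum>j<m. (2 - lam j)^2 * r j ^ 2) > 0"
  proof (rule sum_pos2[of _ j0])
    show "(2 - lam j0)^2 * r j0 ^ 2 > 0" using assms by simp
  qed (use assms in auto)
  ultimately show False by simp
qed

lemma periodic:
  assumes "\<And>j. j < m \<Longrightarrow> \<exists>k::int. a j * A = k" "\<And>j. j < m \<Longrightarrow> \<exists>k::int. b j * A = k"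
  shows "square_torus_periodic A \<phi>"
  unfolding square_torus_periodic_def
proof (intro allI conjI)
  fix x y
  show "\<phi> (x + 2*pi*A, y) = \<phi> (x, y)" unfolding G_def split
    apply (intro sum.cong refl)
    subgoal for j
    proof -
      assume "j \<in> {..<m}"
      then obtain k where k: "a j * A = of_int k" using assms(1)[of j] by auto
      show ?thesis by (simp only: shift_x[OF k])
    qed
    done
  show "\<phi> (x, y + 2*pi*A) = \<phi> (x, y)" unfolding G_def split
    apply (intro sum.cong refl)
    subgoal for j
    proof -
      assume "j \<in> {..<m}"
      then obtain k where k: "b j * A = of_int k" using assms(2)[of j] by auto
      show ?thesis by (simp only: shift_y[OF k])
    qed
    done
qed

end



lemma cos_eq_all:
  fixes \<alpha> \<beta> :: real
  assumes "\<And>t. cos (t * \<alpha>) = cos (t * \<beta>)"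
  shows "\<bar>\<alpha>\<bar> = \<bar>\<beta>\<bar>"
proof (rule ccontr)
  assume ne: "\<bar>\<alpha>\<bar> \<noteq> \<bar>\<beta>\<bar>"
  then have s: "\<alpha> + \<beta> \<noteq> 0" "\<alpha> - \<beta> \<noteq> 0" by auto
  define t where "t = 1 / (\<bar>\<alpha>\<bar> + \<bar>\<beta>\<bar>)"
  have pos: "\<bar>\<alpha>\<bar> + \<bar>\<beta>\<bar> > 0" using ne by auto
  have t0: "t > 0" using pos unfolding t_def by simp
  have b1: "\<bar>t * \<alpha> + t * \<beta>\<bar> \<le> 1" "\<bar>t * \<beta> - t * \<alpha>\<bar> \<le> 1"
  proof -
    have "\<bar>t * \<alpha> + t * \<beta>\<bar> \<le> t * (\<bar>\<alpha>\<bar> + \<bar>\<beta>\<bar>)"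
      using abs_triangle_ineq[of "t*\<alpha>" "t*\<beta>"] t0 by (simp add: abs_mult distrib_left)
    also have "\<dots> = 1" using pos unfolding t_def by simp
    finally show "\<bar>t * \<alpha> + t * \<beta>\<bar> \<le> 1" .
    have "\<bar>t * \<beta> - t * \<alpha>\<bar> \<le> t * (\<bar>\<alpha>\<bar> + \<bar>\<beta>\<bar>)"
      using abs_triangle_ineq4[of "t*\<beta>" "t*\<alpha>"] t0 by (simp add: abs_mult distrib_left)
    also have "\<dots> = 1" using pos unfolding t_def by simp
    finally show "\<bar>t * \<beta> - t * \<alpha>\<bar> \<le> 1" .
  qed
  have "cos (t * \<alpha>) - cos (t * \<beta>) = 2 * sin ((t * \<alpha> + t * \<beta>) / 2) * sin ((t * \<beta> - t * \<alpha>) / 2)"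
    by (rule cos_diff_cos)
  then have "sin ((t * \<alpha> + t * \<beta>) / 2) = 0 \<or> sin ((t * \<beta> - t * \<alpha>) / 2) = 0" using assms[of t] by simp
  moreover have "\<bar>(t * \<alpha> + t * \<beta>) / 2\<bar> < pi" "\<bar>(t * \<beta> - t * \<alpha>) / 2\<bar> < pi"
    using b1 pi_gt3 by auto
  ultimately have "(t * \<alpha> + t * \<beta>) / 2 = 0 \<or> (t * \<beta> - t * \<alpha>) / 2 = 0"
    using sin_zero_pi_iff by blast
  then have "t * (\<alpha> + \<beta>) = 0 \<or> t * (\<beta> - \<alpha>) = 0" by (auto simp: algebra_simps)
  then show False using t0 s by auto
qed

lemma exists_h:
  fixes \<xi> \<eta> :: "'a::real_inner"
  assumes "\<xi> \<noteq> 0" "\<eta> \<noteq> \<xi>" "\<eta> \<noteq> - \<xi>"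
  shows "\<exists>h. cos (inner \<xi> h) \<noteq> cos (inner \<eta> h)"
proof (rule ccontr)
  assume "\<not> ?thesis"
  then have all: "\<And>h. cos (inner \<xi> h) = cos (inner \<eta> h)" by auto
  have w: "\<bar>inner \<xi> w\<bar> = \<bar>inner \<eta> w\<bar>" for w
    by (rule cos_eq_all) (use all[of "t *\<^sub>R w" for t] in simp)
  have 1: "inner \<xi> \<xi> = \<bar>inner \<xi> \<eta>\<bar>" using w[of \<xi>] by (simp add: inner_commute)
  have 2: "inner \<eta> \<eta> = \<bar>inner \<xi> \<eta>\<bar>" using w[of \<eta>] by simp
  show False
  proof (cases "inner \<xi> \<eta> \<ge> 0")
    case True
    have "inner (\<xi> - \<eta>) (\<xi> - \<eta>) = 0" using 1 2 True
      by (simp add: inner_diff_left inner_diff_right inner_commute)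
    then show False using assms by simp
  next
    case False
    have "inner (\<xi> + \<eta>) (\<xi> + \<eta>) = 0" using 1 2 False
      by (simp add: inner_add_left inner_add_right inner_commute)
    then have "\<eta> = - \<xi>" by (simp add: add_eq_0_iff2)
    then show False using assms by simp
  qed
qed

definition TT :: "('b \<Rightarrow> 'a::real_inner) \<Rightarrow> ('b \<Rightarrow> real) \<Rightarrow> ('b \<Rightarrow> real) \<Rightarrow> 'b \<Rightarrow> 'a \<Rightarrow> real" where
  "TT \<xi> C S i p = C i * cos (inner (\<xi> i) p) + S i * sin (inner (\<xi> i) p)"

lemma TT_shift: "(TT \<xi> C S i (p + h) + TT \<xi> C S i (p - h)) / 2 - cos (inner (\<xi> k) h) * TT \<xi> C S i p
   = TT \<xi> (\<lambda>i. (cos (inner (\<xi> i) h) - cos (inner (\<xi> k) h)) * C i) (\<lambda>i. (cos (inner (\<xi> i) h) - cos (inner (\<xi> k) h)) * S i) i p"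
  unfolding TT_def by (simp add: inner_add_right inner_diff_right cos_add cos_diff sin_add sin_diff algebra_simps)

lemma indep:
  fixes \<xi> :: "'b \<Rightarrow> 'a::real_inner"
  assumes "finite K" "j0 \<notin> K" "\<xi> j0 \<noteq> 0" "\<forall>j\<in>K. \<xi> j \<noteq> \<xi> j0 \<and> \<xi> j \<noteq> - \<xi> j0"
    "\<forall>p. TT \<xi> C S j0 p + (\<Sum>j\<in>K. TT \<xi> C S j p) = 0"
  shows "C j0 = 0 \<and> S j0 = 0"
  using assms
proof (induction K arbitrary: C S rule: finite_induct)
  case empty
  have c: "C j0 = 0" using empty.prems(4)[rule_format, of 0] by (simp add: TT_def)
  define p where "p = (pi / 2 / inner (\<xi> j0) (\<xi> j0)) *\<^sub>R \<xi> j0"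
  have "inner (\<xi> j0) p = pi / 2" using empty.prems(2) unfolding p_def by simp
  then have "sin (inner (\<xi> j0) p) = 1" by (simp only: sin_pi_half)
  then have "S j0 = 0" using empty.prems(4)[rule_format, of p] c by (simp add: TT_def)
  with c show ?case by simp
next
  case (insert j K)
  obtain h where h: "cos (inner (\<xi> j0) h) \<noteq> cos (inner (\<xi> j) h)"
    using exists_h[of "\<xi> j0" "\<xi> j"] insert.prems by auto
  define f where "f i = cos (inner (\<xi> i) h) - cos (inner (\<xi> j) h)" for i
  have A: "j0 \<notin> K" "\<xi> j0 \<noteq> 0" "\<forall>j\<in>K. \<xi> j \<noteq> \<xi> j0 \<and> \<xi> j \<noteq> - \<xi> j0" using insert.prems by auto
  have B: "\<forall>p. TT \<xi> (\<lambda>i. f i * C i) (\<lambda>i. f i * S i) j0 p + (\<Sum>j\<in>K. TT \<xi> (\<lambda>i. f i * C i) (\<lambda>i. f i * S i) j p) = 0"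
    proof
      fix p
      let ?F = "\<lambda>p. TT \<xi> C S j0 p + (\<Sum>j\<in>insert j K. TT \<xi> C S j p)"
      have z: "?F (p + h) = 0" "?F (p - h) = 0" "?F p = 0" using insert.prems(4) by auto
      have "(?F (p + h) + ?F (p - h)) / 2 - cos (inner (\<xi> j) h) * ?F p
          = ((TT \<xi> C S j0 (p + h) + TT \<xi> C S j0 (p - h)) / 2 - cos (inner (\<xi> j) h) * TT \<xi> C S j0 p)
           + (\<Sum>i\<in>insert j K. (TT \<xi> C S i (p + h) + TT \<xi> C S i (p - h)) / 2 - cos (inner (\<xi> j) h) * TT \<xi> C S i p)"
        by (simp add: sum.distrib sum_subtractf sum_divide_distrib sum_distrib_left algebra_simps add_divide_distrib)
      also have "\<dots> = TT \<xi> (\<lambda>i. f i * C i) (\<lambda>i. f i * S i) j0 p + (\<Sum>i\<in>insert j K. TT \<xi> (\<lambda>i. f i * C i) (\<lambda>i. f i * S i) i p)"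
        unfolding TT_shift f_def by simp
      also have "\<dots> = TT \<xi> (\<lambda>i. f i * C i) (\<lambda>i. f i * S i) j0 p + (\<Sum>i\<in>K. TT \<xi> (\<lambda>i. f i * C i) (\<lambda>i. f i * S i) i p)"
        using insert.hyps by (simp add: TT_def f_def)
      finally show "TT \<xi> (\<lambda>i. f i * C i) (\<lambda>i. f i * S i) j0 p + (\<Sum>j\<in>K. TT \<xi> (\<lambda>i. f i * C i) (\<lambda>i. f i * S i) j p) = 0"
        using z by simp
    qed
  have "f j0 * C j0 = 0 \<and> f j0 * S j0 = 0" using insert.IH[OF A B] by simp
  moreover have "f j0 \<noteq> 0" using h unfolding f_def by simp
  ultimately show ?case by simp
qed




context conf begin

lemma full:
  assumes SP: "\<And>v. (\<forall>i<2*m. inner v (E i) = 0) \<Longrightarrow> v = 0"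
    and R: "\<And>j. j < m \<Longrightarrow> r j \<noteq> 0"
    and NZ: "\<And>j. j < m \<Longrightarrow> (a j, b j) \<noteq> 0"
    and DI: "\<And>i j. i < m \<Longrightarrow> j < m \<Longrightarrow> i \<noteq> j \<Longrightarrow> (a i, b i) \<noteq> (a j, b j) \<and> (a i, b i) \<noteq> - (a j, b j)"
  shows "full_map \<phi>"
  unfolding full_map_def
proof (rule notI, elim exE conjE)
  fix v :: "real^'n" assume v0: "v \<noteq> 0" and vp: "\<forall>p. inner v (\<phi> p) = 0"
  define \<xi> where "\<xi> j = (a j, b j)" for j
  define C where "C j = r j * inner v (E (2*j))" for j
  define S where "S j = r j * inner v (E (2*j+1))" for j
  have eq: "inner v (\<phi> p) = (\<Sum>j<m. TT \<xi> C S j p)" for p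
  proof -
    obtain x y where p: "p = (x,y)" by fastforce
    show ?thesis unfolding p G_def split inner_sum_right
      by (intro sum.cong refl) (simp add: TT_def \<xi>_def C_def S_def inner_add_right algebra_simps)
  qed
  have CS: "C j0 = 0 \<and> S j0 = 0" if j0: "j0 < m" for j0
  proof (rule indep[of "{..<m} - {j0}" j0 \<xi>])
    show "finite ({..<m} - {j0})" "j0 \<notin> {..<m} - {j0}" by auto
    show "\<xi> j0 \<noteq> 0" using NZ[OF j0] unfolding \<xi>_def .
    show "\<forall>j\<in>{..<m} - {j0}. \<xi> j \<noteq> \<xi> j0 \<and> \<xi> j \<noteq> - \<xi> j0" using DI j0 unfolding \<xi>_def by auto
    show "\<forall>p. TT \<xi> C S j0 p + (\<Sum>j\<in>{..<m} - {j0}. TT \<xi> C S j p) = 0"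
    proof
      fix p
      have "TT \<xi> C S j0 p + (\<Sum>j\<in>{..<m} - {j0}. TT \<xi> C S j p) = (\<Sum>j<m. TT \<xi> C S j p)"
        using j0 by (simp add: sum.remove[of "{..<m}" j0])
      then show "TT \<xi> C S j0 p + (\<Sum>j\<in>{..<m} - {j0}. TT \<xi> C S j p) = 0" using eq vp by simp
    qed
  qed
  have "\<forall>i<2*m. inner v (E i) = 0"
  proof (intro allI impI)
    fix i assume i: "i < 2*m"
    define j where "j = i div 2"
    have j: "j < m" using i unfolding j_def by simp
    have "i = 2*j \<or> i = 2*j+1" unfolding j_def by presburger
    then show "inner v (E i) = 0" using CS[OF j] R[OF j] unfolding C_def S_def by auto
  qed
  then show False using SP v0 by blast
qed

end



definition hh :: "nat \<Rightarrow> nat" where "hh m = (if even m then 2 else 3)"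
definition cc :: "nat \<Rightarrow> nat" where "cc m = (m - hh m) div 2"
definition Dp :: "nat \<Rightarrow> real" where "Dp m = 4 * (\<Prod>i\<in>{2..cc m + 1}. (real i ^ 2 + 1))"
definition Ep :: "nat \<Rightarrow> nat \<Rightarrow> real" where "Ep m s = 4 * (\<Prod>i\<in>{2..cc m + 1} - {s}. (real i ^ 2 + 1))"
definition XX where "XX m s = Ep m s * (real s ^ 2 - 1)"
definition YY where "YY m s = 2 * Ep m s * real s"

definition kk :: "nat \<Rightarrow> nat \<Rightarrow> real" where
  "kk m j = (if j = 0 then Dp m else if j < hh m then (if even m then 0 else 3) else
     (if even (j - hh m) then XX m ((j - hh m) div 2 + 2) else - YY m ((j - hh m) div 2 + 2)))"
definition ll :: "nat \<Rightarrow> nat \<Rightarrow> real" where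
  "ll m j = (if j = 0 then 0 else if j < hh m then (if even m then 4 else if j = 1 then 5 else -5) else
     (if even (j - hh m) then YY m ((j - hh m) div 2 + 2) else XX m ((j - hh m) div 2 + 2)))"
definition wt :: "nat \<Rightarrow> nat \<Rightarrow> real" where
  "wt m j = (if j = 0 then 8 / Dp m ^ 2 else if j < hh m then (if even m then 1/2 else 1/4) else
     (1/2 - 8 / Dp m ^ 2) / (2 * real (cc m)))"
definition K1 :: "nat \<Rightarrow> real" where "K1 m = (if even m then 16 else 34)"

lemma m_split: "m \<ge> 3 \<Longrightarrow> m = hh m + 2 * cc m"
  unfolding hh_def cc_def by presburger

lemma Dp_ge: "Dp m \<ge> 4"
proof -
  have "1 \<le> (\<Prod>i\<in>{2..cc m + 1}. (real i ^ 2 + 1))" by (rule prod_ge_1) simp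
  then show ?thesis unfolding Dp_def by simp
qed

lemma Dp_ge20: assumes "cc m \<ge> 1" shows "Dp m \<ge> 20"
proof -
  define A where "A = {2..cc m + 1}"
  have 2: "2 \<in> A" using assms unfolding A_def by simp
  have "(\<Prod>i\<in>A. (real i ^ 2 + 1)) = (real 2 ^ 2 + 1) * (\<Prod>i\<in>A - {2}. (real i ^ 2 + 1))"
    by (rule prod.remove[OF _ 2]) (simp add: A_def)
  moreover have "1 \<le> (\<Prod>i\<in>A - {2}. (real i ^ 2 + 1))" by (rule prod_ge_1) simp
  ultimately have "(\<Prod>i\<in>A. (real i ^ 2 + 1)) \<ge> 5" by simp
  then show ?thesis unfolding Dp_def A_def[symmetric] by simp
qed

lemma Dp_cc0: "cc m = 0 \<Longrightarrow> Dp m = 4"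
  unfolding Dp_def by simp

lemma Ep_pos: "Ep m s > 0"
  unfolding Ep_def by (intro mult_pos_pos prod_pos) (simp_all add: add_nonneg_pos)

lemma Ep_D: assumes "s \<in> {2..cc m + 1}" shows "Ep m s * (real s ^ 2 + 1) = Dp m"
  unfolding Ep_def Dp_def using prod.remove[OF _ assms, of "\<lambda>i. real i ^ 2 + 1"] by (simp add: algebra_simps)

lemma XY_norm: assumes "s \<in> {2..cc m + 1}" shows "XX m s ^ 2 + YY m s ^ 2 = Dp m ^ 2"
proof -
  have "XX m s ^ 2 + YY m s ^ 2 = (Ep m s * (real s ^ 2 + 1)) ^ 2"
    unfolding XX_def YY_def by (simp add: power2_eq_square algebra_simps)
  then show ?thesis using Ep_D[OF assms] by simp
qed

lemma XY_pos: assumes "s \<ge> 2" shows "XX m s > 0" "YY m s > 0"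
proof -
  have "real s ^ 2 \<ge> 4" using assms
    by (metis numeral_le_real_of_nat_iff power2_nat_le_imp_le power_mono zero_le_numeral numeral_Bit0 num_double power2_eq_square one_add_one numeral_times_numeral)
  then show "XX m s > 0" unfolding XX_def using Ep_pos by simp
  show "YY m s > 0" unfolding YY_def using Ep_pos assms by simp
qed




lemma sum_pairs: fixes c h :: nat shows "(\<Sum>j<h + 2 * c. f j) = (\<Sum>j<h. f j) + (\<Sum>s<c. f (h + 2 * s) + f (h + 2 * s + 1))"
  by (induction c) (simp_all add: algebra_simps)

definition wp where "wp m = (1/2 - 8 / Dp m ^ 2) / (2 * real (cc m))"

lemma wp_sum: "real (cc m) * (2 * wp m) = 1/2 - 8 / Dp m ^ 2"
proof (cases "cc m = 0")
  case True then show ?thesis using Dp_cc0[OF True] unfolding wp_def by simp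
next
  case False then show ?thesis unfolding wp_def by simp
qed

lemma wp_nonneg: "wp m \<ge> 0"
proof -
  have "(4::real) ^ 2 \<le> Dp m ^ 2" by (rule power_mono[OF Dp_ge]) simp
  then have "Dp m ^ 2 \<ge> 16" by simp
  then have "8 / Dp m ^ 2 \<le> 1/2" by (simp add: divide_le_eq)
  then show ?thesis unfolding wp_def by simp
qed

lemma pair_vals: assumes "s < cc m"
  shows "kk m (hh m + 2 * s) = XX m (s+2)" "ll m (hh m + 2 * s) = YY m (s+2)"
    "kk m (hh m + 2 * s + 1) = - YY m (s+2)" "ll m (hh m + 2 * s + 1) = XX m (s+2)"
    "wt m (hh m + 2 * s) = wp m" "wt m (hh m + 2 * s + 1) = wp m"
proof -
  have h2: "hh m \<ge> 2" unfolding hh_def by simp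
  have e1: "(2 * s) div 2 = s" "(2 * s + 1) div 2 = s" by presburger+
  show "kk m (hh m + 2 * s) = XX m (s+2)" "ll m (hh m + 2 * s) = YY m (s+2)"
    "kk m (hh m + 2 * s + 1) = - YY m (s+2)" "ll m (hh m + 2 * s + 1) = XX m (s+2)"
    "wt m (hh m + 2 * s) = wp m" "wt m (hh m + 2 * s + 1) = wp m"
    using h2 unfolding kk_def ll_def wt_def wp_def by (simp_all add: e1)
qed

lemma sum_conf: assumes "m \<ge> 3" 
  shows "(\<Sum>j<m. f j) = (\<Sum>j<hh m. f j) + (\<Sum>s<cc m. f (hh m + 2 * s) + f (hh m + 2 * s + 1))"
  using sum_pairs[of f "hh m" "cc m"] m_split[OF assms] by simp

lemma head_even: "even m \<Longrightarrow> (\<Sum>j<hh m. f j) = f 0 + f 1"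
  unfolding hh_def by (simp add: numeral_2_eq_2)
lemma head_odd: "odd m \<Longrightarrow> (\<Sum>j<hh m. f j) = f 0 + f 1 + f 2"
  unfolding hh_def by (simp add: numeral_3_eq_3 numeral_2_eq_2)

lemma hh_even: "even m \<Longrightarrow> hh m = 2" unfolding hh_def by simp
lemma hh_odd: "odd m \<Longrightarrow> hh m = 3" unfolding hh_def by simp

lemma head_cases:
  assumes "even m \<Longrightarrow> f 0 + f 1 = v" "odd m \<Longrightarrow> f 0 + f 1 + f 2 = v"
  shows "(\<Sum>j<hh m. f j) = v"
  using assms head_even head_odd by (cases "even m") auto

lemma pairs_sq: "(\<Sum>s<cc m. wt m (hh m + 2 * s) * (f (kk m (hh m + 2 * s)) (ll m (hh m + 2 * s)))
   + wt m (hh m + 2 * s + 1) * (f (kk m (hh m + 2 * s + 1)) (ll m (hh m + 2 * s + 1))))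
   = (\<Sum>s<cc m. wp m * (f (XX m (s+2)) (YY m (s+2)) + f (- YY m (s+2)) (XX m (s+2))))"
  apply (intro sum.cong refl)
  subgoal for s using pair_vals[of s m] by (simp add: distrib_left)
  done

lemma T1: assumes "m \<ge> 3" shows "(\<Sum>j<m. wt m j) = 1"
proof -
  have p: "(\<Sum>s<cc m. wt m (hh m + 2 * s) + wt m (hh m + 2 * s + 1)) = 1/2 - 8 / Dp m ^ 2"
    using wp_sum[of m] pairs_sq[of m "\<lambda>x y. 1"] by (simp add: algebra_simps)
  have h: "(\<Sum>j<hh m. wt m j) = 1/2 + 8 / Dp m ^ 2"
    by (rule head_cases) (simp_all add: wt_def hh_even hh_odd)
  show ?thesis unfolding sum_conf[OF assms] p h by simp
qed


lemma T2: assumes "m \<ge> 3" shows "(\<Sum>j<m. wt m j * kk m j ^ 2) = (K1 m + Dp m ^ 2) / 4"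
proof -
  have "(\<Sum>s<cc m. wt m (hh m + 2 * s) * kk m (hh m + 2 * s) ^ 2 + wt m (hh m + 2 * s + 1) * kk m (hh m + 2 * s + 1) ^ 2)
     = (\<Sum>s<cc m. wp m * (XX m (s+2) ^ 2 + YY m (s+2) ^ 2))"
    using pairs_sq[of m "\<lambda>x y. x ^ 2"] by simp
  also have "\<dots> = (\<Sum>s<cc m. wp m * Dp m ^ 2)"
    by (intro sum.cong refl) (simp add: XY_norm)
  also have "\<dots> = Dp m ^ 2 / 4 - 4"
    using wp_sum[of m] Dp_ge[of m] by (simp add: field_simps)
  finally have p: "(\<Sum>s<cc m. wt m (hh m + 2 * s) * kk m (hh m + 2 * s) ^ 2 + wt m (hh m + 2 * s + 1) * kk m (hh m + 2 * s + 1) ^ 2) = Dp m ^ 2 / 4 - 4" .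
  have h: "(\<Sum>j<hh m. wt m j * kk m j ^ 2) = 4 + K1 m / 4"
    using Dp_ge[of m] by (intro head_cases) (simp_all add: wt_def kk_def hh_even hh_odd K1_def field_simps)
  show ?thesis unfolding sum_conf[OF assms] p h by (simp add: field_simps)
qed

lemma T3: assumes "m \<ge> 3" shows "(\<Sum>j<m. wt m j * ll m j ^ 2) = (K1 m + Dp m ^ 2) / 4"
proof -
  have "(\<Sum>s<cc m. wt m (hh m + 2 * s) * ll m (hh m + 2 * s) ^ 2 + wt m (hh m + 2 * s + 1) * ll m (hh m + 2 * s + 1) ^ 2)
     = (\<Sum>s<cc m. wp m * (YY m (s+2) ^ 2 + XX m (s+2) ^ 2))"
    using pairs_sq[of m "\<lambda>x y. y ^ 2"] by simp
  also have "\<dots> = (\<Sum>s<cc m. wp m * Dp m ^ 2)"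
    by (intro sum.cong refl) (simp add: XY_norm add.commute)
  also have "\<dots> = Dp m ^ 2 / 4 - 4"
    using wp_sum[of m] Dp_ge[of m] by (simp add: field_simps)
  finally have p: "(\<Sum>s<cc m. wt m (hh m + 2 * s) * ll m (hh m + 2 * s) ^ 2 + wt m (hh m + 2 * s + 1) * ll m (hh m + 2 * s + 1) ^ 2) = Dp m ^ 2 / 4 - 4" .
  have h: "(\<Sum>j<hh m. wt m j * ll m j ^ 2) = 4 + K1 m / 4"
    using Dp_ge[of m] by (intro head_cases) (simp_all add: wt_def ll_def hh_even hh_odd K1_def field_simps)
  show ?thesis unfolding sum_conf[OF assms] p h by (simp add: field_simps)
qed

lemma T4: assumes "m \<ge> 3" shows "(\<Sum>j<m. wt m j * (kk m j * ll m j)) = 0"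
proof -
  have p: "(\<Sum>s<cc m. wt m (hh m + 2 * s) * (kk m (hh m + 2 * s) * ll m (hh m + 2 * s)) + wt m (hh m + 2 * s + 1) * (kk m (hh m + 2 * s + 1) * ll m (hh m + 2 * s + 1))) = 0"
    using pairs_sq[of m "\<lambda>x y. x * y"] by simp
  have h: "(\<Sum>j<hh m. wt m j * (kk m j * ll m j)) = 0"
    by (rule head_cases) (simp_all add: wt_def kk_def ll_def hh_even hh_odd)
  show ?thesis unfolding sum_conf[OF assms] p h by simp
qed




lemma cc_pos_if_pair: assumes "m \<ge> 3" "hh m \<le> j" "j < m" shows "cc m \<ge> 1"
  using m_split[OF assms(1)] assms by linarith

lemma pair_form:
  assumes "m \<ge> 3" "hh m \<le> j" "j < m"
  obtains s where "s \<in> {2..cc m + 1}" "kk m j = XX m s" "ll m j = YY m s" "j = hh m + 2 * (s - 2)"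
  | s where "s \<in> {2..cc m + 1}" "kk m j = - YY m s" "ll m j = XX m s" "j = hh m + 2 * (s - 2) + 1"
proof -
  have h2: "hh m \<ge> 2" unfolding hh_def by simp
  define t where "t = j - hh m"
  have t: "j = hh m + t" "t < 2 * cc m" using m_split[OF assms(1)] assms unfolding t_def by linarith+
  define s where "s = t div 2 + 2"
  have s: "s \<in> {2..cc m + 1}" using t unfolding s_def by auto
  show ?thesis
  proof (cases "even t")
    case True
    then have "t = 2 * (s - 2)" unfolding s_def by auto
    then show ?thesis using that(1)[OF s] True t h2 unfolding kk_def ll_def s_def by auto
  next
    case False
    then have "t = 2 * (s - 2) + 1" unfolding s_def by presburger
    then show ?thesis using that(2)[OF s] False t h2 unfolding kk_def ll_def s_def by auto
  qed
qed

lemma D2_big: assumes "cc m \<ge> 1" shows "Dp m ^ 2 \<ge> 400"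
proof -
  have "(20::real) ^ 2 \<le> Dp m ^ 2" by (rule power_mono[OF Dp_ge20[OF assms]]) simp
  then show ?thesis by simp
qed

lemma D2_ne_K1: assumes "m \<ge> 3" shows "Dp m ^ 2 \<noteq> K1 m"
proof (cases "cc m = 0")
  case True
  then have "m = hh m" using m_split[OF assms] by simp
  then have "odd m" using assms unfolding hh_def by (auto split: if_splits)
  then show ?thesis using Dp_cc0[OF True] unfolding K1_def by simp
next
  case False
  then show ?thesis using D2_big[of m] unfolding K1_def by auto
qed

lemma norm_conf: assumes "m \<ge> 3" "j < m"
  shows "kk m j ^ 2 + ll m j ^ 2 = (if 1 \<le> j \<and> j < hh m then K1 m else Dp m ^ 2)"
proof -
  consider "j = 0" | "1 \<le> j" "j < hh m" | "hh m \<le> j" by linarith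
  then show ?thesis
  proof cases
    case 1 then show ?thesis unfolding kk_def ll_def by simp
  next
    case 2 then show ?thesis unfolding kk_def ll_def K1_def hh_def
      by (auto split: if_splits)
  next
    case 3
    have nh: "\<not> (1 \<le> j \<and> j < hh m)" using 3 by simp
    from pair_form[OF assms(1) 3 assms(2)] show ?thesis
      by cases (simp_all add: nh XY_norm add.commute)
  qed
qed

lemma wt_pos: assumes "m \<ge> 3" "j < m" shows "wt m j > 0"
proof -
  consider "j = 0" | "1 \<le> j" "j < hh m" | "hh m \<le> j" by linarith
  then show ?thesis
  proof cases
    case 1 then show ?thesis unfolding wt_def using Dp_ge[of m] by simp
  next
    case 2 then show ?thesis unfolding wt_def by simp
  next
    case 3
    have c: "cc m \<ge> 1" using cc_pos_if_pair[OF assms(1) 3 assms(2)] .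
    have "8 / Dp m ^ 2 < 1/2" using D2_big[OF c] by (simp add: divide_less_eq)
    have h2: "hh m \<ge> 2" unfolding hh_def by simp
    then show ?thesis using 3 c \<open>8 / Dp m ^ 2 < 1/2\<close> unfolding wt_def by simp
  qed
qed

lemma Ep_int: "Ep m s \<in> \<int>" unfolding Ep_def by (intro Ints_mult Ints_prod) auto
lemma Dp_int: "Dp m \<in> \<int>" unfolding Dp_def by (intro Ints_mult Ints_prod) auto
lemma XX_int: "XX m s \<in> \<int>" unfolding XX_def by (intro Ints_mult Ints_diff Ep_int) auto
lemma YY_int: "YY m s \<in> \<int>" unfolding YY_def by (intro Ints_mult Ep_int) auto

lemma kk_int: "kk m j \<in> \<int>"
  unfolding kk_def using Dp_int XX_int YY_int by (auto intro: Ints_minus)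
lemma ll_int: "ll m j \<in> \<int>"
  unfolding ll_def using XX_int YY_int by (auto intro: Ints_minus)

lemma ratio_inj: assumes "s \<ge> 2" "s' \<ge> 2" "XX m s = XX m s'" "YY m s = YY m s'" shows "s = s'"
proof -
  have "XX m s * YY m s' = XX m s' * YY m s" using assms by simp
  then have "Ep m s * Ep m s' * (2 * ((real s ^ 2 - 1) * real s' - (real s' ^ 2 - 1) * real s)) = 0"
    unfolding XX_def YY_def by (simp add: algebra_simps)
  then have "(real s ^ 2 - 1) * real s' - (real s' ^ 2 - 1) * real s = 0"
    using Ep_pos[of m s] Ep_pos[of m s'] by simp
  then have "(real s - real s') * (real s * real s' + 1) = 0"
    by (simp add: power2_eq_square algebra_simps)
  moreover have "real s * real s' \<ge> 0" by simp
  then have "real s * real s' + 1 \<noteq> 0" by linarith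
  ultimately show ?thesis by simp
qed




lemma pair_ll_pos: assumes "m \<ge> 3" "hh m \<le> j" "j < m" shows "ll m j > 0"
  using pair_form[OF assms] XY_pos by (metis atLeastAtMost_iff)

lemma DI_sig:
  assumes m: "m \<ge> 3" and i: "i < m" and j: "j < m" and sg: "\<sigma> = 1 \<or> \<sigma> = (-1::real)"
    and e: "kk m i = \<sigma> * kk m j" "ll m i = \<sigma> * ll m j"
  shows "i = j"
proof -
  have h2: "hh m \<ge> 2" unfolding hh_def by simp
  have s2: "\<sigma>^2 = 1" using sg by auto
  have N: "kk m i ^ 2 + ll m i ^ 2 = kk m j ^ 2 + ll m j ^ 2"
    using e s2 by (simp add: power_mult_distrib)
  have K: "Dp m ^ 2 \<noteq> K1 m" using D2_ne_K1[OF m] .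
  have CH: "(1 \<le> i \<and> i < hh m) = (1 \<le> j \<and> j < hh m)"
    using N norm_conf[OF m i] norm_conf[OF m j] K by (auto split: if_splits)
  show ?thesis
  proof (cases "1 \<le> i \<and> i < hh m")
    case True
    then have jh: "1 \<le> j \<and> j < hh m" using CH by simp
    show ?thesis
    proof (cases "even m")
      case True then show ?thesis using \<open>1 \<le> i \<and> i < hh m\<close> jh hh_even by auto
    next
      case False
      then have "hh m = 3" by (simp add: hh_odd)
      then have "i \<in> {1,2}" "j \<in> {1,2}" using \<open>1 \<le> i \<and> i < hh m\<close> jh by auto
      then show ?thesis using e sg False \<open>hh m = 3\<close> unfolding kk_def ll_def by auto
    qed
  next
    case False
    then have jn: "\<not> (1 \<le> j \<and> j < hh m)" using CH by blast
    have ic: "i = 0 \<or> hh m \<le> i" using False by auto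
    have jc: "j = 0 \<or> hh m \<le> j" using jn by auto
    show ?thesis
    proof (cases "i = 0")
      case True
      show ?thesis
      proof (rule ccontr)
        assume "i \<noteq> j" then have "hh m \<le> j" using jc True by auto
        then have "ll m j > 0" using pair_ll_pos[OF m _ j] by simp
        moreover have "ll m i = 0" using True unfolding ll_def by simp
        ultimately show False using e sg by auto
      qed
    next
      case False
      then have ip: "hh m \<le> i" using ic by simp
      have lpi: "ll m i > 0" using pair_ll_pos[OF m ip i] .
      show ?thesis
      proof (cases "j = 0")
        case True
        have "ll m j = 0" using True unfolding ll_def by simp
        then show ?thesis using lpi e by simp
      next
        case False
        then have jp: "hh m \<le> j" using jc by simp
        have lpj: "ll m j > 0" using pair_ll_pos[OF m jp j] .
        have s1: "\<sigma> = 1" using sg e(2) lpi lpj by auto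
        then have e1: "kk m i = kk m j" "ll m i = ll m j" using e by auto
        from pair_form[OF m ip i] show ?thesis
        proof cases
          case (1 s)
          note A = 1
          from pair_form[OF m jp j] show ?thesis
          proof cases
            case (1 s')
            then have "s = s'" using ratio_inj[of s s' m] A e1 by auto
            then show ?thesis using A 1 by simp
          next
            case (2 s')
            then show ?thesis using A e1 XY_pos[of s m] XY_pos[of s' m] by auto
          qed
        next
          case (2 s)
          note A = 2
          from pair_form[OF m jp j] show ?thesis
          proof cases
            case (1 s')
            then show ?thesis using A e1 XY_pos[of s m] XY_pos[of s' m] by auto
          next
            case (2 s')
            then have "s = s'" using ratio_inj[of s s' m] A e1 by auto
            then show ?thesis using A 2 by simp
          qed
        qed
      qed
    qed
  qed
qed




theorem theorem3p11:
  assumes "odd (CARD('n::finite) - 1)" and "CARD('n) - 1 \<ge> 5"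
  shows "\<exists>(a::real) (\<phi>::real \<times> real \<Rightarrow> real^'n). a > 0 \<and> square_torus_periodic a \<phi> \<and>
           isometric_immersion_sphere \<phi> \<and> full_map \<phi> \<and> proper_biharmonic \<phi> \<and> CMC \<phi>"
proof -
  define N where "N = CARD('n)"
  define m where "m = N div 2"
  have N2: "N = 2 * m" and m3: "m \<ge> 3" using assms unfolding N_def m_def by presburger+
  obtain g where g: "bij_betw g {0..<N} (UNIV :: 'n set)"
    using ex_bij_betw_nat_finite[of "UNIV :: 'n set"] unfolding N_def by auto
  define E where "E i = (axis (g i) 1 :: real^'n)" for i
  have ON: "inner (E i) (E i') = (if i = i' then 1 else 0)" if "i < 2*m" "i' < 2*m" for i i'
  proof -
    have inj: "inj_on g {0..<N}" using g by (rule bij_betw_imp_inj_on)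
    have "i \<in> {0..<N}" "i' \<in> {0..<N}" using that N2 by auto
    then have "g i = g i' \<longleftrightarrow> i = i'" using inj_on_eq_iff[OF inj] by blast
    then show ?thesis unfolding E_def inner_axis_axis by simp
  qed
  have SP: "v = 0" if "\<forall>i<2*m. inner v (E i) = 0" for v :: "real^'n"
  proof -
    have "v $ k = 0" for k
    proof -
      have "k \<in> g ` {0..<N}" using bij_betw_imp_surj_on[OF g] by simp
      then obtain i where i: "i \<in> {0..<N}" "g i = k" by blast
      then have "i < 2 * m" using N2 by simp
      then have "inner v (E i) = 0" using that by blast
      then show ?thesis unfolding E_def inner_axis using i by simp
    qed
    then show ?thesis by (simp add: vec_eq_iff)
  qed
  define A where "A = sqrt ((K1 m + Dp m ^ 2) / 4)"
  have K1pos: "K1 m > 0" unfolding K1_def by simp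
  have KD: "K1 m + Dp m ^ 2 > 0" using K1pos by (simp add: add_pos_nonneg)
  have Apos: "A > 0" unfolding A_def using K1pos by (simp add: add_pos_nonneg)
  have A2: "A ^ 2 = (K1 m + Dp m ^ 2) / 4" unfolding A_def using K1pos by (simp add: add_pos_nonneg)
  define a where "a j = kk m j / A" for j
  define b where "b j = ll m j / A" for j
  define r where "r j = sqrt (wt m j)" for j
  define al where "al = K1 m / A ^ 2"
  define be where "be = Dp m ^ 2 / A ^ 2"
  have wnn: "j < m \<Longrightarrow> wt m j \<ge> 0" for j using wt_pos[OF m3] by (simp add: less_imp_le)
  have r2: "j < m \<Longrightarrow> r j ^ 2 = wt m j" for j unfolding r_def using wnn by simp
  interpret C: conf E m a b r al be
  proof
    show "inner (E i) (E i') = (if i = i' then 1 else 0)" if "i < 2*m" "i' < 2*m" for i i' using ON that .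
    show "(\<Sum>j<m. r j ^ 2) = 1" using T1[OF m3] by (simp add: r2)
    have "(\<Sum>j<m. r j ^ 2 * a j ^ 2) = (\<Sum>j<m. wt m j * kk m j ^ 2) / A ^ 2"
      unfolding sum_divide_distrib by (intro sum.cong refl) (simp add: r2 a_def power_divide)
    then show "(\<Sum>j<m. r j ^ 2 * a j ^ 2) = 1" using T2[OF m3] A2 Apos KD by simp
    have "(\<Sum>j<m. r j ^ 2 * b j ^ 2) = (\<Sum>j<m. wt m j * ll m j ^ 2) / A ^ 2"
      unfolding sum_divide_distrib by (intro sum.cong refl) (simp add: r2 b_def power_divide)
    then show "(\<Sum>j<m. r j ^ 2 * b j ^ 2) = 1" using T3[OF m3] A2 Apos KD by simp
    have "(\<Sum>j<m. r j ^ 2 * (a j * b j)) = (\<Sum>j<m. wt m j * (kk m j * ll m j)) / A ^ 2"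
      unfolding sum_divide_distrib by (intro sum.cong refl) (simp add: r2[symmetric] a_def b_def power2_eq_square)
    then show "(\<Sum>j<m. r j ^ 2 * (a j * b j)) = 0" using T4[OF m3] by simp
    show "al + be = 4" unfolding al_def be_def using A2 Apos by (simp add: field_simps)
    show "a j ^ 2 + b j ^ 2 = al \<or> a j ^ 2 + b j ^ 2 = be" if "j < m" for j
    proof -
      have "a j ^ 2 + b j ^ 2 = (kk m j ^ 2 + ll m j ^ 2) / A ^ 2"
        unfolding a_def b_def by (simp add: power_divide add_divide_distrib)
      then show ?thesis using norm_conf[OF m3 that] unfolding al_def be_def by (auto split: if_splits)
    qed
  qed
  have iso: "isometric_immersion_sphere C.\<phi>"
    unfolding isometric_immersion_sphere_def using smooth_G C.norm_phi C.iso by blast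
  have per: "square_torus_periodic A C.\<phi>"
  proof (rule C.periodic)
    show "\<exists>k::int. a j * A = of_int k" for j
      using kk_int[of m j] Apos unfolding a_def by (auto elim!: Ints_cases)
    show "\<exists>k::int. b j * A = of_int k" for j
      using ll_int[of m j] Apos unfolding b_def by (auto elim!: Ints_cases)
  qed
  have full: "full_map C.\<phi>"
  proof (rule C.full)
    show "v = 0" if "\<forall>i<2*m. inner v (E i) = 0" for v using SP that by blast
    show "r j \<noteq> 0" if "j < m" for j using wt_pos[OF m3 that] unfolding r_def by simp
    show "(a j, b j) \<noteq> 0" if "j < m" for j
    proof
      assume "(a j, b j) = 0"
      then have "kk m j = 0" "ll m j = 0" using Apos unfolding a_def b_def by (auto simp: zero_prod_def)
      then show False using norm_conf[OF m3 that] D2_ne_K1[OF m3] K1pos Dp_ge[of m] by (auto split: if_splits)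
    qed
    show "(a i, b i) \<noteq> (a j, b j) \<and> (a i, b i) \<noteq> - (a j, b j)" if "i < m" "j < m" "i \<noteq> j" for i j
    proof
      show "(a i, b i) \<noteq> (a j, b j)"
      proof
        assume "(a i, b i) = (a j, b j)"
        then have "kk m i = 1 * kk m j" "ll m i = 1 * ll m j" using Apos unfolding a_def b_def by auto
        then show False using DI_sig[OF m3 that(1,2)] that(3) by auto
      qed
      show "(a i, b i) \<noteq> - (a j, b j)"
      proof
        assume "(a i, b i) = - (a j, b j)"
        then have "kk m i = (-1) * kk m j" "ll m i = (-1) * ll m j" using Apos unfolding a_def b_def
          by (auto simp: field_simps)
        then show False using DI_sig[OF m3 that(1,2), of "-1"] that(3) by auto
      qed
    qed
  qed
  have pb: "proper_biharmonic C.\<phi>"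
    unfolding proper_biharmonic_def biharmonic_def
  proof (intro conjI allI)
    show "bitension C.\<phi> p = 0" for p by (rule C.biharm)
    show "\<not> harmonic C.\<phi>"
    proof (rule C.not_harm[of 0])
      show "0 < m" using m3 by simp
      show "r 0 \<noteq> 0" using wt_pos[OF m3, of 0] m3 unfolding r_def by simp
      have "C.lam 0 = Dp m ^ 2 / A ^ 2" unfolding C.lam_def a_def b_def kk_def ll_def by (simp add: power_divide)
      then show "C.lam 0 \<noteq> 2" using A2 Apos D2_ne_K1[OF m3] KD by (auto simp: field_simps)
    qed
  qed
  show ?thesis using Apos per iso full pb C.cmc by blast
qed



end
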